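(* Let $\mu_t,c_t\in(0,1)$ with $(\mu_t-c_t,\mu_t+c_t)\subset(0,1)$, let $\mu_t^*\in[0,1]$, let $\mathcal{A}$ be a set of actions, $a_t\in\mathcal{A}$, and $l_t:\mathcal{A}\times\{0,1\}\to\mathbb{R}$. Define $$L_t^{\max}=\max_{\tilde\mu\in[\mu_t-c_t,\mu_t+c_t]}\mathbb{E}_{Y\sim\mathrm{Bernoulli}(\tilde\mu)}[l_t(a_t,Y)],\qquad L_t^{\min}=\min_{\tilde\mu\in[\mu_t-c_t,\mu_t+c_t]}\mathbb{E}_{Y\sim\mathrm{Bernoulli}(\tilde\mu)}[l_t(a_t,Y)],$$ $L_t^*=\mathbb{E}_{Y\sim\mathrm{Bernoulli}(\mu_t^* )}[l_t(a_t,Y)]$, and for a stake $b_t\in\mathbb{R}$, $$L_t^{\mathrm{pay}}=L_t^*-\mathbb{E}_{Y\sim\mathrm{Bernoulli}(\mu_t^* )}\big[b_t(Y-\mu_t)+|b_t|c_t\big].$$ If $b_t=l_t(a_t,1)-l_t(a_t,0)$, then $L_t^{\mathrm{pay}}\in[L_t^{\min},L_t^{\max}]$. *)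

theory Defs
  imports "HOL-Probability.Probability"
begin

text \<open>Expected loss of action a when Y ~ Bernoulli(p); outcomes {0,1} encoded as bool
  (False = 0, True = 1).\<close>
definition exp_loss :: "('a \<Rightarrow> bool \<Rightarrow> real) \<Rightarrow> 'a \<Rightarrow> real \<Rightarrow> real" where
  "exp_loss l a p = measure_pmf.expectation (bernoulli_pmf p) (\<lambda>Y. l a Y)"

definition L_max :: "('a \<Rightarrow> bool \<Rightarrow> real) \<Rightarrow> 'a \<Rightarrow> real \<Rightarrow> real \<Rightarrow> real" where
  "L_max l a \<mu> c = (SUP m\<in>{\<mu> - c..\<mu> + c}. exp_loss l a m)"

definition L_min :: "('a \<Rightarrow> bool \<Rightarrow> real) \<Rightarrow> 'a \<Rightarrow> real \<Rightarrow> real \<Rightarrow> real" where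
  "L_min l a \<mu> c = (INF m\<in>{\<mu> - c..\<mu> + c}. exp_loss l a m)"

definition L_pay :: "('a \<Rightarrow> bool \<Rightarrow> real) \<Rightarrow> 'a \<Rightarrow> real \<Rightarrow> real \<Rightarrow> real \<Rightarrow> real \<Rightarrow> real" where
  "L_pay l a \<mu> c \<mu>s b = exp_loss l a \<mu>s
     - measure_pmf.expectation (bernoulli_pmf \<mu>s) (\<lambda>Y. b * (of_bool Y - \<mu>) + \<bar>b\<bar> * c)"

end

theory Submission
  imports Defs
begin

lemma exp_loss_eq:
  assumes "0 \<le> p" "p \<le> 1"
  shows "exp_loss l a p = l a False + p * (l a True - l a False)"
  using assms by (simp add: exp_loss_def algebra_simps)

lemma exp_loss_bdd:
  assumes "0 \<le> p" "p \<le> 1"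
  shows "\<bar>exp_loss l a p\<bar> \<le> \<bar>l a True\<bar> + \<bar>l a False\<bar>"
proof -
  have "\<bar>l a False + p * (l a True - l a False)\<bar> = \<bar>p * l a True + (1 - p) * l a False\<bar>"
    by (simp add: algebra_simps)
  also have "\<dots> \<le> \<bar>p * l a True\<bar> + \<bar>(1 - p) * l a False\<bar>" by (rule abs_triangle_ineq)
  also have "\<dots> = p * \<bar>l a True\<bar> + (1 - p) * \<bar>l a False\<bar>" using assms by (simp add: abs_mult)
  also have "\<dots> \<le> \<bar>l a True\<bar> + \<bar>l a False\<bar>"
    using assms mult_left_le_one_le[of "\<bar>l a True\<bar>" p] mult_left_le_one_le[of "\<bar>l a False\<bar>" "1-p"]
    by (simp add: mult.commute)
  finally show ?thesis using exp_loss_eq[OF assms, of l a] by simp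
qed


theorem proposition2:
  fixes \<mu> c \<mu>s b :: real and A :: "'a set" and a :: 'a and l :: "'a \<Rightarrow> bool \<Rightarrow> real"
  assumes "0 < \<mu>" "\<mu> < 1" "0 < c" "c < 1"
    and "{\<mu> - c<..<\<mu> + c} \<subseteq> {0<..<1}"
    and "0 \<le> \<mu>s" "\<mu>s \<le> 1"
    and "a \<in> A"
    and "b = l a True - l a False"
  shows "L_pay l a \<mu> c \<mu>s b \<in> {L_min l a \<mu> c .. L_max l a \<mu> c}"
proof -
  have lo: "0 \<le> \<mu> - c"
  proof (rule ccontr)
    assume "\<not> 0 \<le> \<mu> - c"
    then have "(0::real) \<in> {\<mu> - c<..<\<mu> + c}" using assms(1,3) by auto
    then show False using assms(5) by (meson greaterThanLessThan_iff less_irrefl subsetD)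
  qed
  have hi: "\<mu> + c \<le> 1"
  proof (rule ccontr)
    assume "\<not> \<mu> + c \<le> 1"
    then have "(1::real) \<in> {\<mu> - c<..<\<mu> + c}" using assms(2,3) by auto
    then show False using assms(5) by (meson greaterThanLessThan_iff less_irrefl subsetD)
  qed
  define m0 where "m0 = (if b \<ge> 0 then \<mu> - c else \<mu> + c)"
  have m0: "m0 \<in> {\<mu> - c..\<mu> + c}" unfolding m0_def using assms(3) by auto
  have m01: "0 \<le> m0" "m0 \<le> 1" using m0 lo hi by auto
  have e1: "measure_pmf.expectation (bernoulli_pmf \<mu>s) (\<lambda>Y. b * (of_bool Y - \<mu>) + \<bar>b\<bar> * c)
      = b * (\<mu>s - \<mu>) + \<bar>b\<bar> * c"
    using assms(6,7) by (simp add: algebra_simps)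
  have "L_pay l a \<mu> c \<mu>s b = exp_loss l a m0"
    unfolding L_pay_def e1 exp_loss_eq[OF m01] exp_loss_eq[OF assms(6,7)] assms(9)[symmetric]
    by (simp add: m0_def algebra_simps abs_if)
  moreover have B: "\<And>m. m \<in> {\<mu> - c..\<mu> + c} \<Longrightarrow> \<bar>exp_loss l a m\<bar> \<le> \<bar>l a True\<bar> + \<bar>l a False\<bar>"
    using lo hi by (intro exp_loss_bdd) auto
  have bdd1: "bdd_below (exp_loss l a ` {\<mu> - c..\<mu> + c})"
    by (rule bdd_belowI2[where m="- (\<bar>l a True\<bar> + \<bar>l a False\<bar>)"]) (use B in fastforce)
  have bdd2: "bdd_above (exp_loss l a ` {\<mu> - c..\<mu> + c})"
    by (rule bdd_aboveI2[where M="\<bar>l a True\<bar> + \<bar>l a False\<bar>"]) (use B in fastforce)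
  have "L_min l a \<mu> c \<le> exp_loss l a m0"
    unfolding L_min_def by (rule cINF_lower[OF bdd1 m0])
  moreover have "exp_loss l a m0 \<le> L_max l a \<mu> c"
    unfolding L_max_def by (rule cSUP_upper[OF m0 bdd2])
  ultimately show ?thesis by simp
qed

end
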